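(* Let $\sigma$ be a super filling of $\mathrm{dg}(\lambda)$ (order $<_2$) that is not $\Phi$-trivial, with distinguished label $a$ and with distinguished cell in row $r$. Suppose either (1) $\sigma$ is $\Phi$-nondegenerate and $u$ is the distinguished cell, or (2) $\sigma$ is $\Phi$-degenerate and $u$ is any cell of the degenerate segment with $|\sigma(u)|=a$. Then every non-degenerate triple containing $u$ is a quinv triple in $\Phi_u(\sigma)$ if and only if it is a quinv triple in $\sigma$.
   Context: Let $\lambda=(\lambda_1\ge\dots\ge\lambda_k>0)$ be a partition; $\mathrm{dg}(\lambda)=\{(r,i):1\le i\le k,1\le r\le\lambda_i\}$, $(r,i)$ being row $r$ from the bottom and column $i$ from the left (columns bottom-justified of heights $\lambda_i$). $\mathcal A=\{1,\bar1,2,\bar2,\dots\}$ consists of positive letters $i$ and negative letters $\bar i$, $|i|=|\bar i|=i$, totally ordered by $<_2$: $0<1<2<3<\cdots<\bar3<\bar2<\bar1$. $I(a,b)=1$ if $a>b$ or $a=b$ is negative, and $I(a,b)=0$ if $a<b$ or $a=b$ is positive. A super filling is $\sigma:\mathrm{dg}(\lambda)\to\mathcal A$. A triple is either three cells $(r+1,i),(r,i),(r,j)$ with $i<j$ (non-degenerate), or (degenerate) two cells $(r,i),(r,j)$ with $i<j$ and $\lambda_i=r$; with $a'=\sigma((r+1,i))$ ($a'=0$ if degenerate), $b=\sigma((r,i))$, $c=\sigma((r,j))$, it is a quinv triple iff exactly one of $I(a',b)=1$, $I(c,b)=0$, $I(a',c)=0$ holds. The reading order goes through rows top to bottom, each row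 right to left. $\Phi_u(\sigma)$ changes the sign of the entry in cell $u$. The distinguished label of $\sigma$ is the smallest positive integer $a$ such that some cell $(r,j)$ has $|\sigma((r,j))|=a$ and $r>a$; if none exists $\sigma$ is $\Phi$-trivial. Otherwise the distinguished cell is the first cell in reading order whose entry has absolute value $a$; $\sigma$ is $\Phi$-degenerate if the distinguished cell belongs to some degenerate triple and $\Phi$-nondegenerate otherwise. If $r$ is the row of the distinguished cell, the degenerate segment is the set of cells of row $r$ that belong to degenerate triples. *)

theory Defs
  imports Main
begin

text \<open>Letters: Zero is the auxiliary letter 0 (used only for degenerate triples),
  Pos i is the positive letter i, Neg i is the negative letter bar i.\<close>
datatype letter = Zero | Pos nat | Neg nat

fun absl :: "letter \<Rightarrow> nat" where
  "absl Zero = 0" | "absl (Pos i) = i" | "absl (Neg i) = i"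

fun is_neg :: "letter \<Rightarrow> bool" where
  "is_neg (Neg i) = True" | "is_neg _ = False"

fun lt2 :: "letter \<Rightarrow> letter \<Rightarrow> bool" where
  "lt2 Zero Zero = False"
| "lt2 Zero _ = True"
| "lt2 _ Zero = False"
| "lt2 (Pos i) (Pos j) = (i < j)"
| "lt2 (Pos i) (Neg j) = True"
| "lt2 (Neg i) (Pos j) = False"
| "lt2 (Neg i) (Neg j) = (j < i)"

definition Iv :: "letter \<Rightarrow> letter \<Rightarrow> bool" where
  "Iv a b \<longleftrightarrow> lt2 b a \<or> (a = b \<and> is_neg a)"

definition quinv3 :: "letter \<Rightarrow> letter \<Rightarrow> letter \<Rightarrow> bool" where
  "quinv3 a' b c \<longleftrightarrow>
     (let P = Iv a' b; Q = \<not> Iv c b; R = \<not> Iv a' c in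
       (P \<and> \<not> Q \<and> \<not> R) \<or> (\<not> P \<and> Q \<and> \<not> R) \<or> (\<not> P \<and> \<not> Q \<and> R))"

text \<open>Partitions as lists lambda_1 >= ... >= lambda_k > 0; column i (1-based) has height lam!(i-1).\<close>
definition is_partition :: "nat list \<Rightarrow> bool" where
  "is_partition lam \<longleftrightarrow> sorted_wrt (\<ge>) lam \<and> (\<forall>x\<in>set lam. 0 < x)"

text \<open>Cells are (r,i): row r from the bottom, column i from the left, both 1-based.\<close>
definition dg :: "nat list \<Rightarrow> (nat \<times> nat) set" where
  "dg lam = {(r, i). 1 \<le> i \<and> i \<le> length lam \<and> 1 \<le> r \<and> r \<le> lam ! (i - 1)}"

type_synonym filling = "nat \<times> nat \<Rightarrow> letter"

definition super_filling :: "nat list \<Rightarrow> filling \<Rightarrow> bool" where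
  "super_filling lam \<sigma> \<longleftrightarrow> (\<forall>c\<in>dg lam. \<sigma> c \<noteq> Zero \<and> absl (\<sigma> c) \<ge> 1)"

definition ntriple :: "nat list \<Rightarrow> nat \<times> nat \<times> nat \<Rightarrow> bool" where
  "ntriple lam t = (case t of (r, i, j) \<Rightarrow>
      i < j \<and> (r + 1, i) \<in> dg lam \<and> (r, i) \<in> dg lam \<and> (r, j) \<in> dg lam)"

definition ntriple_cells :: "nat \<times> nat \<times> nat \<Rightarrow> (nat \<times> nat) set" where
  "ntriple_cells t = (case t of (r, i, j) \<Rightarrow> {(r + 1, i), (r, i), (r, j)})"

definition dtriple :: "nat list \<Rightarrow> nat \<times> nat \<times> nat \<Rightarrow> bool" where
  "dtriple lam t = (case t of (r, i, j) \<Rightarrow>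
      i < j \<and> (r, i) \<in> dg lam \<and> (r, j) \<in> dg lam \<and> lam ! (i - 1) = r)"

definition dtriple_cells :: "nat \<times> nat \<times> nat \<Rightarrow> (nat \<times> nat) set" where
  "dtriple_cells t = (case t of (r, i, j) \<Rightarrow> {(r, i), (r, j)})"

definition quinv_ntriple :: "filling \<Rightarrow> nat \<times> nat \<times> nat \<Rightarrow> bool" where
  "quinv_ntriple \<sigma> t = (case t of (r, i, j) \<Rightarrow>
      quinv3 (\<sigma> (r + 1, i)) (\<sigma> (r, i)) (\<sigma> (r, j)))"

fun negl :: "letter \<Rightarrow> letter" where
  "negl Zero = Zero" | "negl (Pos i) = Neg i" | "negl (Neg i) = Pos i"

definition Phi :: "nat \<times> nat \<Rightarrow> filling \<Rightarrow> filling" where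
  "Phi u \<sigma> = \<sigma>(u := negl (\<sigma> u))"

text \<open>Reading order: rows top to bottom, each row right to left.
  read_before c d: c comes strictly before d.\<close>
definition read_before :: "nat \<times> nat \<Rightarrow> nat \<times> nat \<Rightarrow> bool" where
  "read_before c d \<longleftrightarrow> fst c > fst d \<or> (fst c = fst d \<and> snd c > snd d)"

definition phi_trivial :: "nat list \<Rightarrow> filling \<Rightarrow> bool" where
  "phi_trivial lam \<sigma> \<longleftrightarrow>
     \<not> (\<exists>a>0. \<exists>(r, j)\<in>dg lam. absl (\<sigma> (r, j)) = a \<and> r > a)"

definition dist_label :: "nat list \<Rightarrow> filling \<Rightarrow> nat" where
  "dist_label lam \<sigma> =
     (LEAST a. a > 0 \<and> (\<exists>(r, j)\<in>dg lam. absl (\<sigma> (r, j)) = a \<and> r > a))"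

definition dist_cell :: "nat list \<Rightarrow> filling \<Rightarrow> nat \<times> nat" where
  "dist_cell lam \<sigma> = (THE d. d \<in> dg lam \<and> absl (\<sigma> d) = dist_label lam \<sigma> \<and>
      (\<forall>c\<in>dg lam. absl (\<sigma> c) = dist_label lam \<sigma> \<longrightarrow> c = d \<or> read_before d c))"

definition phi_degenerate :: "nat list \<Rightarrow> filling \<Rightarrow> bool" where
  "phi_degenerate lam \<sigma> \<longleftrightarrow>
     (\<exists>t. dtriple lam t \<and> dist_cell lam \<sigma> \<in> dtriple_cells t)"

definition degenerate_segment :: "nat list \<Rightarrow> filling \<Rightarrow> (nat \<times> nat) set" where
  "degenerate_segment lam \<sigma> =
     {c. fst c = fst (dist_cell lam \<sigma>) \<and> (\<exists>t. dtriple lam t \<and> c \<in> dtriple_cells t)}"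

end

theory Submission
  imports Defs
begin
lemma LA: "absl x = a \<Longrightarrow> a \<ge> 1 \<Longrightarrow> absl b \<ge> a \<Longrightarrow> absl c \<ge> a \<Longrightarrow> quinv3 (negl x) b c = quinv3 x b c"
  by (cases x; cases b; cases c) (auto simp: quinv3_def Iv_def)
lemma LB: "absl x = a \<Longrightarrow> a \<ge> 1 \<Longrightarrow> absl a' > a \<Longrightarrow> absl c > a \<Longrightarrow> quinv3 a' (negl x) c = quinv3 a' x c"
  by (cases x; cases a'; cases c) (auto simp: quinv3_def Iv_def)
lemma LC: "absl x = a \<Longrightarrow> a \<ge> 1 \<Longrightarrow> absl a' > a \<Longrightarrow> absl b \<ge> a \<Longrightarrow> quinv3 a' b (negl x) = quinv3 a' b x"
  by (cases x; cases a'; cases b) (auto simp: quinv3_def Iv_def)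

lemma dg_finite: "finite (dg lam)"
proof -
  have "dg lam \<subseteq> {..sum_list lam} \<times> {..length lam}"
  proof
    fix c assume "c \<in> dg lam"
    then obtain r i where c: "c = (r,i)" "1 \<le> i" "i \<le> length lam" "r \<le> lam ! (i-1)"
      unfolding dg_def by auto
    have "lam ! (i-1) \<in> set lam" using c by auto
    hence "lam ! (i-1) \<le> sum_list lam" by (simp add: member_le_sum_list)
    thus "c \<in> {..sum_list lam} \<times> {..length lam}" using c by auto
  qed
  thus ?thesis by (rule finite_subset) auto
qed

lemma dist_cell_props:
  assumes "a = dist_label lam \<sigma>" "\<exists>c\<in>dg lam. absl (\<sigma> c) = a"
  shows "dist_cell lam \<sigma> \<in> dg lam \<and> absl (\<sigma> (dist_cell lam \<sigma>)) = a \<and>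
     (\<forall>c\<in>dg lam. absl (\<sigma> c) = a \<longrightarrow> c = dist_cell lam \<sigma> \<or> read_before (dist_cell lam \<sigma>) c)"
proof -
  define S where "S = {c\<in>dg lam. absl (\<sigma> c) = a}"
  have fS: "finite S" using dg_finite[of lam] unfolding S_def by auto
  have nS: "S \<noteq> {}" using assms(2) unfolding S_def by auto
  define key where "key = (\<lambda>c::nat\<times>nat. (fst c, snd c))"
  obtain d where dS: "d \<in> S" and dmax: "\<forall>c\<in>S. fst c < fst d \<or> (fst c = fst d \<and> snd c \<le> snd d)"
  proof -
    define m where "m = Max (fst ` S)"
    have m1: "m \<in> fst ` S" unfolding m_def using fS nS by auto
    define T where "T = {c\<in>S. fst c = m}"
    have fT: "finite T" "T \<noteq> {}" using fS m1 unfolding T_def by auto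
    define n where "n = Max (snd ` T)"
    have "n \<in> snd ` T" unfolding n_def using fT by auto
    then obtain d where d: "d \<in> T" "snd d = n" by auto
    show ?thesis
    proof (rule that[of d])
      show "d \<in> S" using d T_def by auto
      show "\<forall>c\<in>S. fst c < fst d \<or> (fst c = fst d \<and> snd c \<le> snd d)"
      proof
        fix c assume c: "c \<in> S"
        have "fst c \<le> m" unfolding m_def using c fS by auto
        moreover have "fst c = m \<Longrightarrow> snd c \<le> n" unfolding n_def using c fT T_def by auto
        ultimately show "fst c < fst d \<or> (fst c = fst d \<and> snd c \<le> snd d)"
          using d T_def by force
      qed
    qed
  qed
  have P: "d \<in> dg lam \<and> absl (\<sigma> d) = dist_label lam \<sigma> \<and>
      (\<forall>c\<in>dg lam. absl (\<sigma> c) = dist_label lam \<sigma> \<longrightarrow> c = d \<or> read_before d c)"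
    using dS dmax assms(1) unfolding S_def read_before_def by (force simp: prod_eq_iff)
  have "dist_cell lam \<sigma> = d"
    unfolding dist_cell_def
  proof (rule the_equality)
    show "d \<in> dg lam \<and> absl (\<sigma> d) = dist_label lam \<sigma> \<and>
      (\<forall>c\<in>dg lam. absl (\<sigma> c) = dist_label lam \<sigma> \<longrightarrow> c = d \<or> read_before d c)" by (rule P)
    fix d' assume d': "d' \<in> dg lam \<and> absl (\<sigma> d') = dist_label lam \<sigma> \<and>
      (\<forall>c\<in>dg lam. absl (\<sigma> c) = dist_label lam \<sigma> \<longrightarrow> c = d' \<or> read_before d' c)"
    hence "d = d' \<or> read_before d' d" using P by blast
    moreover have "d' = d \<or> read_before d d'" using P d' by blast
    ultimately show "d' = d" unfolding read_before_def by auto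
  qed
  thus ?thesis using P assms(1) by simp
qed

theorem mainTheorem10:
  fixes lam :: "nat list" and \<sigma> :: filling and u :: "nat \<times> nat"
  assumes "is_partition lam"
    and "super_filling lam \<sigma>"
    and "\<not> phi_trivial lam \<sigma>"
    and "(\<not> phi_degenerate lam \<sigma> \<and> u = dist_cell lam \<sigma>) \<or>
         (phi_degenerate lam \<sigma> \<and> u \<in> degenerate_segment lam \<sigma> \<and>
            absl (\<sigma> u) = dist_label lam \<sigma>)"
  shows "\<forall>t. ntriple lam t \<and> u \<in> ntriple_cells t \<longrightarrow>
           (quinv_ntriple (Phi u \<sigma>) t \<longleftrightarrow> quinv_ntriple \<sigma> t)"
proof -
  define a where "a = dist_label lam \<sigma>"
  define Q where "Q = (\<lambda>a. a > 0 \<and> (\<exists>(r, j)\<in>dg lam. absl (\<sigma> (r, j)) = a \<and> r > a))"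
  have ex: "\<exists>a. Q a" using assms(3) unfolding phi_trivial_def Q_def by blast
  have aL: "a = (LEAST a. Q a)" unfolding a_def dist_label_def Q_def by simp
  have Qa: "Q a" using LeastI_ex[OF ex] aL by simp
  hence a1: "a \<ge> 1" unfolding Q_def by simp
  obtain r0 j0 where rj0: "(r0,j0) \<in> dg lam" "absl (\<sigma> (r0,j0)) = a" "r0 > a"
    using Qa unfolding Q_def by blast
  have minQ: "\<And>b. b < a \<Longrightarrow> \<not> Q b" using not_less_Least aL by blast
  define d where "d = dist_cell lam \<sigma>"
  have dp: "d \<in> dg lam" "absl (\<sigma> d) = a"
     "\<And>c. c\<in>dg lam \<Longrightarrow> absl (\<sigma> c) = a \<Longrightarrow> c = d \<or> read_before d c"
    using dist_cell_props[OF a_def, of] rj0 unfolding d_def by blast+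
  have fd: "fst d > a" using dp(3)[OF rj0(1,2)] rj0(3) unfolding read_before_def by auto
  have G1: "absl (\<sigma> c) \<ge> a" if "c \<in> dg lam" "fst c \<ge> a" for c
  proof (rule ccontr)
    assume "\<not> a \<le> absl (\<sigma> c)"
    moreover have "absl (\<sigma> c) \<ge> 1" using assms(2) that unfolding super_filling_def by auto
    ultimately have "Q (absl (\<sigma> c))" unfolding Q_def using that
      by (cases c) force
    with minQ \<open>\<not> a \<le> absl (\<sigma> c)\<close> show False by simp
  qed
  have G2: "absl (\<sigma> c) \<noteq> a" if "c \<in> dg lam" "read_before c d" for c
    using dp(3)[of c] that unfolding read_before_def by auto
  have ua: "absl (\<sigma> u) = a" and fu: "fst u = fst d"
    using assms(4) dp(2) unfolding a_def d_def degenerate_segment_def by auto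
  show ?thesis
  proof (intro allI impI)
    fix t assume t: "ntriple lam t \<and> u \<in> ntriple_cells t"
    obtain r i j where tt: "t = (r,i,j)" by (cases t)
    have ij: "i < j" and c1: "(r+1,i) \<in> dg lam" and c2: "(r,i) \<in> dg lam" and c3: "(r,j) \<in> dg lam"
      using t unfolding tt ntriple_def by auto
    have "u = (r+1,i) \<or> u = (r,i) \<or> u = (r,j)" using t unfolding tt ntriple_cells_def by auto
    moreover
    { assume u: "u = (r+1,i)"
      have "quinv3 (negl (\<sigma> u)) (\<sigma> (r,i)) (\<sigma> (r,j)) = quinv3 (\<sigma> u) (\<sigma> (r,i)) (\<sigma> (r,j))"
        by (rule LA[OF ua a1 G1[OF c2] G1[OF c3]]) (use u fu fd in auto)
      hence "quinv_ntriple (Phi u \<sigma>) t = quinv_ntriple \<sigma> t" using u unfolding tt quinv_ntriple_def Phi_def by auto }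
    moreover
    { assume u: "u = (r,i)"
      have nd: "u = d"
      proof (rule ccontr)
        assume "u \<noteq> d"
        hence "u \<in> degenerate_segment lam \<sigma>" using assms(4) d_def by auto
        then obtain t' where t': "dtriple lam t'" "u \<in> dtriple_cells t'"
          unfolding degenerate_segment_def by auto
        obtain r' i' j' where tt': "t' = (r',i',j')" by (cases t')
        have sw: "sorted_wrt (\<ge>) lam" using assms(1) unfolding is_partition_def by simp
        have l1: "r+1 \<le> lam ! (i-1)" "1 \<le> i" "i \<le> length lam" using c1 unfolding dg_def by auto
        from t' tt' u have "(r = r' \<and> i = i') \<or> (r = r' \<and> i = j')"
          unfolding dtriple_cells_def by auto
        thus False
        proof
          assume "r = r' \<and> i = i'" thus False using t' tt' l1 unfolding dtriple_def by auto
        next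
          assume h: "r = r' \<and> i = j'"
          have "i' < j'" "lam ! (i'-1) = r'" "1 \<le> i'" using t' tt' unfolding dtriple_def dg_def by auto
          moreover have "lam ! (i'-1) \<ge> lam ! (i-1)"
            using sorted_wrt_nth_less[OF sw, of "i'-1" "i-1"] h l1 \<open>i' < j'\<close> \<open>1 \<le> i'\<close> by auto
          ultimately show False using h l1 by auto
        qed
      qed
      have x1: "absl (\<sigma> (r+1,i)) > a"
        using G1[OF c1] G2[OF c1] nd u fd unfolding read_before_def by fastforce
      have x2: "absl (\<sigma> (r,j)) > a"
        using G1[OF c3] G2[OF c3] nd u fd ij unfolding read_before_def by fastforce
      have "quinv3 (\<sigma> (r+1,i)) (negl (\<sigma> u)) (\<sigma> (r,j)) = quinv3 (\<sigma> (r+1,i)) (\<sigma> u) (\<sigma> (r,j))"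
        by (rule LB[OF ua a1 x1 x2])
      hence "quinv_ntriple (Phi u \<sigma>) t = quinv_ntriple \<sigma> t" using u ij unfolding tt quinv_ntriple_def Phi_def by auto }
    moreover
    { assume u: "u = (r,j)"
      have x1: "absl (\<sigma> (r+1,i)) > a"
        using G1[OF c1] G2[OF c1] u fu fd unfolding read_before_def by fastforce
      have "quinv3 (\<sigma> (r+1,i)) (\<sigma> (r,i)) (negl (\<sigma> u)) = quinv3 (\<sigma> (r+1,i)) (\<sigma> (r,i)) (\<sigma> u)"
        by (rule LC[OF ua a1 x1 G1[OF c2]]) (use u fu fd in auto)
      hence "quinv_ntriple (Phi u \<sigma>) t = quinv_ntriple \<sigma> t" using u ij unfolding tt quinv_ntriple_def Phi_def by auto }
    ultimately show "quinv_ntriple (Phi u \<sigma>) t = quinv_ntriple \<sigma> t" by blast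
  qed
qed
end
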